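(* Let $a<b$ with $[a,b]\subset[0,\infty)$, let $f,g:[a,b]\to\mathbb{R}$ be integrable with $0\le g(t)\le1$ for all $t\in[a,b]$ and such that $\int_a^b g(t)f'(t)\,dt$ exists. Suppose $f$ is absolutely continuous on $[a,b]$ and $|f'|$ is $s$-convex on $[a,b]$ for some fixed $s\in(0,1]$. Let $\lambda:=\int_a^b g(t)\,dt$. Then $$\left|\int_a^{a+\lambda} f(t)\,dt-\int_a^b f(t)g(t)\,dt\right|\le\frac{1}{s+1}\left[\int_{a+\lambda}^b g(t)\,dt\right]\left[\lambda|f'(a)|+(b-a)|f'(a+\lambda)|+(b-a-\lambda)|f'(b)|\right]$$ $$\le\frac{b-a-\lambda}{s+1}\left[\lambda|f'(a)|+(b-a)|f'(a+\lambda)|+(b-a-\lambda)|f'(b)|\right],$$ and $$\left|\int_a^b f(t)g(t)\,dt-\int_{b-\lambda}^b f(t)\,dt\right|\le\frac{1}{s+1}\left[\int_a^{b-\lambda} g(t)\,dt\right]\left[(b-a-\lambda)|f'(a)|+(b-a)|f'(b-\lambda)|+\lambda|f'(b)|\right]$$ $$\le\frac{\lambda}{s+1}\left[(b-a-\lambda)|f'(a)|+(b-a)|f'(b-\lambda)|+\lambda|f'(b)|\right].$$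
   Context: For fixed $s\in(0,1]$, a function $h:I\to\mathbb{R}$ on an interval $I\subset[0,\infty)$ is $s$-convex (in the second sense) if $h(\alpha x+\beta y)\le\alpha^s h(x)+\beta^s h(y)$ for all $x,y\in I$ and all $\alpha,\beta\ge0$ with $\alpha+\beta=1$. *)

theory Defs
  imports "HOL-Analysis.Analysis"
begin

definition s_convex_on :: "real \<Rightarrow> real set \<Rightarrow> (real \<Rightarrow> real) \<Rightarrow> bool" where
  "s_convex_on s I h \<longleftrightarrow>
     (\<forall>x\<in>I. \<forall>y\<in>I. \<forall>\<alpha> \<beta>::real. \<alpha> \<ge> 0 \<longrightarrow> \<beta> \<ge> 0 \<longrightarrow> \<alpha> + \<beta> = 1 \<longrightarrow>
        h (\<alpha> * x + \<beta> * y) \<le> \<alpha> powr s * h x + \<beta> powr s * h y)"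

definition abs_continuous_on :: "real \<Rightarrow> real \<Rightarrow> (real \<Rightarrow> real) \<Rightarrow> bool" where
  "abs_continuous_on a b f \<longleftrightarrow>
     (\<forall>\<epsilon>>0. \<exists>\<delta>>0. \<forall>(n::nat) (u::nat \<Rightarrow> real) (v::nat \<Rightarrow> real).
        (\<forall>i<n. a \<le> u i \<and> u i \<le> v i \<and> v i \<le> b) \<longrightarrow>
        (\<forall>i<n. \<forall>j<n. i \<noteq> j \<longrightarrow> v i \<le> u j \<or> v j \<le> u i) \<longrightarrow>
        (\<Sum>i<n. v i - u i) < \<delta> \<longrightarrow>
        (\<Sum>i<n. \<bar>f (v i) - f (u i)\<bar>) < \<epsilon>)"

end

theory Submission
  imports Defs
begin


lemma ac_family:
  assumes "abs_continuous_on a b f" "e > 0"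
  shows "\<exists>d>0. \<forall>(I::'a set) u v. finite I \<longrightarrow> (\<forall>i\<in>I. a \<le> u i \<and> u i \<le> v i \<and> v i \<le> b)
     \<longrightarrow> (\<forall>i\<in>I. \<forall>j\<in>I. i\<noteq>j \<longrightarrow> v i \<le> u j \<or> v j \<le> u i)
     \<longrightarrow> (\<Sum>i\<in>I. v i - u i) < d \<longrightarrow> (\<Sum>i\<in>I. \<bar>f (v i) - f (u i)\<bar>) < e"
proof -
  obtain d where d: "d>0" and H0: "\<forall>(n::nat) (u::nat \<Rightarrow> real) (v::nat \<Rightarrow> real).
        (\<forall>i<n. a \<le> u i \<and> u i \<le> v i \<and> v i \<le> b) \<longrightarrow>
        (\<forall>i<n. \<forall>j<n. i \<noteq> j \<longrightarrow> v i \<le> u j \<or> v j \<le> u i) \<longrightarrow>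
        (\<Sum>i<n. v i - u i) < d \<longrightarrow>
        (\<Sum>i<n. \<bar>f (v i) - f (u i)\<bar>) < e"
    using assms(1)[unfolded abs_continuous_on_def, rule_format, OF assms(2)] by auto
  note H = H0[rule_format]
  show ?thesis
  proof (intro exI[of _ d] conjI allI impI, rule d)
    fix I :: "'a set" and u v :: "'a \<Rightarrow> real"
    assume fin: "finite I" and c1: "\<forall>i\<in>I. a \<le> u i \<and> u i \<le> v i \<and> v i \<le> b"
      and c2: "\<forall>i\<in>I. \<forall>j\<in>I. i\<noteq>j \<longrightarrow> v i \<le> u j \<or> v j \<le> u i"
      and c3: "(\<Sum>i\<in>I. v i - u i) < d"
    obtain hh where hh: "bij_betw hh {0..<card I} I" using ex_bij_betw_nat_finite[OF fin] by blast
    have eq1: "(\<Sum>k<card I. v (hh k) - u (hh k)) = (\<Sum>i\<in>I. v i - u i)"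
      using sum.reindex_bij_betw[OF hh, of "\<lambda>i. v i - u i"] by (simp add: lessThan_atLeast0)
    have eq2: "(\<Sum>k<card I. \<bar>f (v (hh k)) - f (u (hh k))\<bar>) = (\<Sum>i\<in>I. \<bar>f (v i) - f (u i)\<bar>)"
      using sum.reindex_bij_betw[OF hh, of "\<lambda>i. \<bar>f (v i) - f (u i)\<bar>"] by (simp add: lessThan_atLeast0)
    have inI: "\<And>k. k < card I \<Longrightarrow> hh k \<in> I" using hh by (auto simp: bij_betw_def)
    have inj: "\<And>k l. k < card I \<Longrightarrow> l < card I \<Longrightarrow> k \<noteq> l \<Longrightarrow> hh k \<noteq> hh l"
      using hh by (auto simp: bij_betw_def inj_on_def)
    have "(\<Sum>k<card I. \<bar>f ((v \<circ> hh) k) - f ((u \<circ> hh) k)\<bar>) < e"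
      apply (rule H)
      using c1 c2 inI inj eq1 c3 by auto
    then show "(\<Sum>i\<in>I. \<bar>f (v i) - f (u i)\<bar>) < e" using eq2 by simp
  qed
qed

lemma ac_cont:
  assumes "abs_continuous_on a b f"
  shows "continuous_on {a..b} f"
  unfolding continuous_on_iff
proof (intro ballI allI impI)
  fix t e :: real assume t: "t \<in> {a..b}" and e: "0 < e"
  obtain d where d: "d>0" and H0: "\<forall>(n::nat) (u::nat \<Rightarrow> real) (v::nat \<Rightarrow> real).
        (\<forall>i<n. a \<le> u i \<and> u i \<le> v i \<and> v i \<le> b) \<longrightarrow>
        (\<forall>i<n. \<forall>j<n. i \<noteq> j \<longrightarrow> v i \<le> u j \<or> v j \<le> u i) \<longrightarrow>
        (\<Sum>i<n. v i - u i) < d \<longrightarrow>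
        (\<Sum>i<n. \<bar>f (v i) - f (u i)\<bar>) < e"
    using assms[unfolded abs_continuous_on_def, rule_format, OF e] by auto
  note H = H0[rule_format]
  show "\<exists>d>0. \<forall>x'\<in>{a..b}. dist x' t < d \<longrightarrow> dist (f x') (f t) < e"
  proof (intro exI conjI ballI impI, rule d)
    fix w assume w: "w \<in> {a..b}" "dist w t < d"
    have "(\<Sum>i<(1::nat). \<bar>f ((\<lambda>_. max w t) i) - f ((\<lambda>_. min w t) i)\<bar>) < e"
      apply (rule H) using w t by (auto simp: dist_real_def)
    then show "dist (f w) (f t) < e" by (cases "w \<le> t") (simp_all add: dist_real_def max_def min_def abs_minus_commute)
  qed
qed




lemma open_cover_null:
  assumes "N \<in> null_sets lebesgue" "(d::real) > 0"
  obtains U where "open U" "N \<subseteq> U" "U \<in> lmeasurable" "measure lebesgue U < d"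
proof -
  have Ns: "N \<in> sets lebesgue" using assms(1) by auto
  obtain T where T: "open T" "N \<subseteq> T" "(T - N) \<in> lmeasurable" "emeasure lebesgue (T - N) < ennreal d"
    using sets_lebesgue_outer_open[OF Ns assms(2)] by blast
  have TU: "T = (T - N) \<union> N" using T(2) by blast
  have Tm: "T \<in> lmeasurable" using T(3) fmeasurableI_null_sets[OF assms(1)] TU
    by (metis fmeasurable.Un)
  have "measure lebesgue T = measure lebesgue (T - N)"
    using TU measure_Un_null_set[OF _ assms(1), of "T - N"] T(3) by (metis fmeasurableD)
  moreover have "measure lebesgue (T - N) < d"
    using T(4) emeasure_eq_measure2[OF T(3)] by (simp add: ennreal_less_iff)
  ultimately show thesis using that[OF T(1) T(2) Tm] by simp
qed

lemma disj_int:
  fixes c1 d1 c2 d2 :: real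
  assumes "c1 < d1" "c2 < d2" "{c1<..<d1} \<inter> {c2<..<d2} = {}"
  shows "d1 \<le> c2 \<or> d2 \<le> c1"
proof (rule ccontr)
  assume "\<not> ?thesis"
  then have "(max c1 c2 + min d1 d2)/2 \<in> {c1<..<d1} \<inter> {c2<..<d2}" using assms(1,2)
    by (auto simp: max_def min_def)
  then show False using assms(3) by blast
qed




lemma KL:
  fixes f f' \<phi> :: "real \<Rightarrow> real"
  assumes ac: "abs_continuous_on a b f" and sub: "a \<le> x" "x \<le> y" "y \<le> b"
   and phic: "continuous_on {x..y} \<phi>" and phinn: "\<And>t. t\<in>{x..y} \<Longrightarrow> 0 \<le> \<phi> t"
   and der: "AE t in lebesgue. t \<in> {x..y} \<longrightarrow> (f has_real_derivative f' t) (at t)"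
   and le: "\<And>t. t\<in>{x..y} \<Longrightarrow> f' t \<le> \<phi> t"
  shows "f y - f x \<le> integral {x..y} \<phi>"
proof -
  define \<Phi> where "\<Phi> u = integral {x..u} \<phi>" for u
  define G where "G u = \<Phi> u - f u" for u
  have Phimono: "\<Phi> c \<le> \<Phi> d" if "x \<le> c" "c \<le> d" "d \<le> y" for c d
  proof -
    have int: "\<phi> integrable_on {x..d}" using phic that
      by (meson atLeastatMost_subset_iff integrable_continuous_interval continuous_on_subset order_refl)
    have "\<Phi> d = \<Phi> c + integral {c..d} \<phi>"
      unfolding \<Phi>_def using Henstock_Kurzweil_Integration.integral_combine[OF that(1,2) int] by simp
    moreover have "integral {c..d} \<phi> \<ge> 0"
      apply (rule integral_nonneg)
      using integrable_subinterval_real[OF int] that apply simp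
      using phinn that by auto
    ultimately show ?thesis by simp
  qed
  have Gder: "(G has_real_derivative (\<phi> t - f' t)) (at t within {x..y})"
    if "t \<in> {x..y}" "(f has_real_derivative f' t) (at t)" for t
  proof -
    have "(\<Phi> has_real_derivative \<phi> t) (at t within {x..y})"
      using integral_has_vector_derivative[OF phic that(1)]
      unfolding \<Phi>_def has_real_derivative_iff_has_vector_derivative by simp
    moreover have "(f has_real_derivative f' t) (at t within {x..y})"
      using that(2) by (rule has_field_derivative_at_within)
    ultimately show ?thesis unfolding G_def[abs_def] by (rule derivative_intros)
  qed
  have main: "G x - G y \<le> e * (1 + (y - x))" if e: "e > 0" for e
  proof -
    obtain N where N: "{t \<in> space lebesgue. \<not> (t \<in> {x..y} \<longrightarrow> (f has_real_derivative f' t) (at t))} \<subseteq> N"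
      "emeasure lebesgue N = 0" "N \<in> sets lebesgue"
      using der by (rule AE_E)
    have Nnull: "N \<in> null_sets lebesgue" using N by auto
    have Nder: "t \<in> {x..y} \<Longrightarrow> t \<notin> N \<Longrightarrow> (f has_real_derivative f' t) (at t)" for t
      using N(1) by auto
    obtain \<delta> where \<delta>: "\<delta> > 0" and AC0: "\<forall>(I::(real \<times> real set) set) u v. finite I \<longrightarrow> (\<forall>i\<in>I. a \<le> u i \<and> u i \<le> v i \<and> v i \<le> b)
     \<longrightarrow> (\<forall>i\<in>I. \<forall>j\<in>I. i\<noteq>j \<longrightarrow> v i \<le> u j \<or> v j \<le> u i)
     \<longrightarrow> (\<Sum>i\<in>I. v i - u i) < \<delta> \<longrightarrow> (\<Sum>i\<in>I. \<bar>f (v i) - f (u i)\<bar>) < e"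
      using ac_family[where 'a="real \<times> real set", OF ac e] by blast
    obtain U where U: "open U" "N \<subseteq> U" "U \<in> lmeasurable" "measure lebesgue U < \<delta>"
      using open_cover_null[OF Nnull \<delta>] by blast
    have "\<forall>t\<in>{x..y}-N. \<exists>d>0. \<forall>w\<in>{x..y}. norm (w - t) < d \<longrightarrow>
          norm (G w - G t - (\<phi> t - f' t) * (w - t)) \<le> e * norm (w - t)"
    proof
      fix t assume t: "t \<in> {x..y} - N"
      have "(G has_derivative (\<lambda>h. (\<phi> t - f' t) * h)) (at t within {x..y})"
        using Gder[of t] t Nder[of t] by (simp add: has_field_derivative_def)
      then show "\<exists>d>0. \<forall>w\<in>{x..y}. norm (w - t) < d \<longrightarrow>
          norm (G w - G t - (\<phi> t - f' t) * (w - t)) \<le> e * norm (w - t)"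
        unfolding has_derivative_within_alt using e by blast
    qed
    from bchoice[OF this] obtain dd where dd0: "\<forall>t\<in>{x..y}-N. dd t > 0 \<and> (\<forall>w\<in>{x..y}. norm (w - t) < dd t \<longrightarrow>
          norm (G w - G t - (\<phi> t - f' t) * (w - t)) \<le> e * norm (w - t))"
      by blast
    have dd: "dd t > 0 \<and> (\<forall>w\<in>{x..y}. norm (w - t) < dd t \<longrightarrow>
          norm (G w - G t - (\<phi> t - f' t) * (w - t)) \<le> e * norm (w - t))" if "t\<in>{x..y}-N" for t
      using dd0 that by blast
    define \<gamma> where "\<gamma> t = (if t \<in> N then U else ball t (if t \<in> {x..y} then dd t else 1))" for t
    have "gauge \<gamma>"
      unfolding gauge_def
    proof (intro allI conjI)
      fix t
      show "t \<in> \<gamma> t"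
      proof (cases "t \<in> N")
        case True then show ?thesis using U(2) unfolding \<gamma>_def by auto
      next
        case False then show ?thesis using dd[of t] unfolding \<gamma>_def by auto
      qed
      show "open (\<gamma> t)" using U(1) unfolding \<gamma>_def by auto
    qed
    then obtain p where p: "p tagged_division_of {x..y}" "\<gamma> fine p"
      using fine_division_exists_real by blast
    have finp: "finite p" using p(1) by auto
    have Kform: "\<exists>c d. K = {c..d} \<and> c \<le> d \<and> x \<le> c \<and> d \<le> y \<and> t \<in> K \<and> K \<subseteq> \<gamma> t" if tKp: "(t,K) \<in> p" for t K
    proof -
      obtain c d where K: "K = cbox c d" using tagged_division_ofD(4)[OF p(1) tKp] by blast
      have tK: "t \<in> K" using tagged_division_ofD(2)[OF p(1) tKp] .
      have Ks: "K \<subseteq> {x..y}" using tagged_division_ofD(3)[OF p(1) tKp] .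
      have "K \<subseteq> \<gamma> t" using p(2) tKp unfolding fine_def by blast
      then show ?thesis using K tK Ks by (intro exI[of _ c] exI[of _ d]) auto
    qed
    define P where "P = {(t,K) \<in> p. t \<in> N \<and> Henstock_Kurzweil_Integration.content K > 0}"
    have finP: "finite P" using finp unfolding P_def by (rule rev_finite_subset) auto
    have trm: "G (Sup K) - G (Inf K) \<ge> (if (t,K) \<in> P then - \<bar>f (Sup K) - f (Inf K)\<bar> else - e * Henstock_Kurzweil_Integration.content K)"
      if tK: "(t,K) \<in> p" for t K
    proof -
      obtain c d where K: "K = {c..d}" "c \<le> d" "x \<le> c" "d \<le> y" "t \<in> K" "K \<subseteq> \<gamma> t"
        using Kform[OF tK] by blast
      have SI: "Sup K = d" "Inf K = c" "Henstock_Kurzweil_Integration.content K = d - c" using K by auto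
      show ?thesis
      proof (cases "t \<in> N")
        case True
        have "\<Phi> c \<le> \<Phi> d" using Phimono K by auto
        then have "G d - G c \<ge> - \<bar>f d - f c\<bar>" unfolding G_def by linarith
        moreover have "G d - G c \<ge> - e * Henstock_Kurzweil_Integration.content K" if "(t,K) \<notin> P"
          using that True tK SI unfolding P_def using K by (auto simp: content_real)
        ultimately show ?thesis using SI by auto
      next
        case False
        have tin: "t \<in> {x..y} - N" using K False by auto
        have Kb: "K \<subseteq> ball t (dd t)" using K(6) False tin unfolding \<gamma>_def by auto
        have dc: "c \<in> {x..y}" "d \<in> {x..y}" "norm (c - t) < dd t" "norm (d - t) < dd t"
        proof -
          have cK: "c \<in> ball t (dd t)" "d \<in> ball t (dd t)" using Kb K(1,2) by auto
          then show "c \<in> {x..y}" "d \<in> {x..y}" "norm (c - t) < dd t" "norm (d - t) < dd t"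
            using K by (auto simp: dist_real_def abs_minus_commute)
        qed
        have h1: "norm (G d - G t - (\<phi> t - f' t) * (d - t)) \<le> e * norm (d - t)"
          using dd[OF tin] dc by blast
        have h2: "norm (G c - G t - (\<phi> t - f' t) * (c - t)) \<le> e * norm (c - t)"
          using dd[OF tin] dc by blast
        have nn: "\<phi> t - f' t \<ge> 0" using le[of t] tin by auto
        have tcd: "c \<le> t" "t \<le> d" using K by auto
        have "(\<phi> t - f' t) * (d - t) - (\<phi> t - f' t) * (c - t) \<ge> 0"
          using nn tcd by (simp add: right_diff_distrib[symmetric] mult_nonneg_nonneg)
        then have "G d - G c \<ge> - e * (d - c)"
          using h1 h2 tcd by (auto simp: abs_le_iff algebra_simps)
        moreover have "(t,K) \<notin> P" using False unfolding P_def by auto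
        ultimately show ?thesis using SI by auto
      qed
    qed
    have "G y - G x = (\<Sum>(t,K)\<in>p. G (Sup K) - G (Inf K))"
      using additive_tagged_division_1[OF sub(2) p(1), of G] by simp
    also have "\<dots> \<ge> (\<Sum>(t,K)\<in>p. (if (t,K) \<in> P then - \<bar>f (Sup K) - f (Inf K)\<bar> else - e * Henstock_Kurzweil_Integration.content K))"
      using trm by (intro sum_mono) auto
    finally have s1: "G y - G x \<ge> (\<Sum>(t,K)\<in>p. (if (t,K) \<in> P then - \<bar>f (Sup K) - f (Inf K)\<bar> else - e * Henstock_Kurzweil_Integration.content K))" .
    have Psub: "P \<subseteq> p" unfolding P_def by auto
    have split: "(\<Sum>(t,K)\<in>p. (if (t,K) \<in> P then - \<bar>f (Sup K) - f (Inf K)\<bar> else - e * Henstock_Kurzweil_Integration.content K))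
       = - (\<Sum>(t,K)\<in>P. \<bar>f (Sup K) - f (Inf K)\<bar>) - e * (\<Sum>(t,K)\<in>p - P. Henstock_Kurzweil_Integration.content K)"
    proof -
      have "(\<Sum>(t,K)\<in>p. (if (t,K) \<in> P then - \<bar>f (Sup K) - f (Inf K)\<bar> else - e * Henstock_Kurzweil_Integration.content K))
        = (\<Sum>i\<in>p. (if i \<in> P then - \<bar>f (Sup (snd i)) - f (Inf (snd i))\<bar> else - e * Henstock_Kurzweil_Integration.content (snd i)))"
        by (intro sum.cong) auto
      also have "\<dots> = (\<Sum>i\<in>p \<inter> {i. i \<in> P}. - \<bar>f (Sup (snd i)) - f (Inf (snd i))\<bar>) + (\<Sum>i\<in>p \<inter> - {i. i \<in> P}. - e * Henstock_Kurzweil_Integration.content (snd i))"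
        by (rule sum.If_cases[OF finp])
      also have "\<dots> = (\<Sum>i\<in>p \<inter> P. - \<bar>f (Sup (snd i)) - f (Inf (snd i))\<bar>) + (\<Sum>i\<in>p - P. - e * Henstock_Kurzweil_Integration.content (snd i))"
        by (simp only: Diff_eq Collect_mem_eq)
      also have "\<dots> = - (\<Sum>(t,K)\<in>P. \<bar>f (Sup K) - f (Inf K)\<bar>) - e * (\<Sum>(t,K)\<in>p - P. Henstock_Kurzweil_Integration.content K)"
        using Psub by (simp add: Int_absorb1 sum_negf sum_distrib_left split_def)
      finally show ?thesis .
    qed
    have cont_le: "(\<Sum>(t,K)\<in>p - P. Henstock_Kurzweil_Integration.content K) \<le> y - x"
    proof -
      have "(\<Sum>(t,K)\<in>p - P. Henstock_Kurzweil_Integration.content K) \<le> (\<Sum>(t,K)\<in>p. Henstock_Kurzweil_Integration.content K)"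
        by (rule sum_mono2[OF finp]) auto
      also have "\<dots> = y - x"
        using additive_content_tagged_division[of p x y] p(1) sub(2) by (simp add: content_real)
      finally show ?thesis .
    qed
    have facP: "\<And>t K. (t,K) \<in> P \<Longrightarrow> \<exists>c d. K = {c..d} \<and> c < d \<and> x \<le> c \<and> d \<le> y \<and> K \<subseteq> U"
    proof -
      fix t K assume tK: "(t,K) \<in> P"
      then have tK': "(t,K) \<in> p" "t \<in> N" "Henstock_Kurzweil_Integration.content K > 0" unfolding P_def by auto
      obtain c d where K: "K = {c..d}" "c \<le> d" "x \<le> c" "d \<le> y" "t \<in> K" "K \<subseteq> \<gamma> t"
        using Kform[OF tK'(1)] by blast
      have "c < d" using tK'(3) K by (auto simp: content_real)
      then show "\<exists>c d. K = {c..d} \<and> c < d \<and> x \<le> c \<and> d \<le> y \<and> K \<subseteq> U"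
        using K tK'(2) unfolding \<gamma>_def by auto
    qed
    have facP': "\<exists>c d. snd i = {c..d} \<and> c < d \<and> x \<le> c \<and> d \<le> y \<and> snd i \<subseteq> U" if "i \<in> P" for i
      using facP[of "fst i" "snd i"] that by simp
    have disjP: "Sup (snd i) \<le> Inf (snd j) \<or> Sup (snd j) \<le> Inf (snd i)" if ijP: "i \<in> P" "j \<in> P" "i \<noteq> j" for i j
    proof -
      obtain t1 K1 t2 K2 where ij: "i = (t1,K1)" "j = (t2,K2)" by (cases i, cases j) auto
      obtain c1 d1 where K1: "K1 = {c1..d1}" "c1 < d1" using facP ijP(1) ij by blast
      obtain c2 d2 where K2: "K2 = {c2..d2}" "c2 < d2" using facP ijP(2) ij by blast
      have mem: "(t1,K1) \<in> p" "(t2,K2) \<in> p" "(t1,K1) \<noteq> (t2,K2)" using ijP ij Psub by auto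
      have "interior K1 \<inter> interior K2 = {}"
        by (rule tagged_division_ofD(5)[OF p(1) mem])
      then have "{c1<..<d1} \<inter> {c2<..<d2} = {}" by (simp only: K1(1) K2(1) interior_atLeastAtMost_real)
      then have "d1 \<le> c2 \<or> d2 \<le> c1" by (rule disj_int[OF K1(2) K2(2)])
      moreover have "Sup (snd i) = d1" "Inf (snd i) = c1" "Sup (snd j) = d2" "Inf (snd j) = c2"
        using ij K1 K2 by auto
      ultimately show ?thesis by simp
    qed
    have lenP: "(\<Sum>i\<in>P. Sup (snd i) - Inf (snd i)) < \<delta>"
    proof -
      have "(\<Sum>i\<in>P. Sup (snd i) - Inf (snd i)) = (\<Sum>i\<in>P. measure lebesgue (snd i))"
      proof (intro sum.cong refl)
        fix i assume "i \<in> P"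
        then obtain c d where "snd i = {c..d}" "c < d" using facP'[OF \<open>i \<in> P\<close>] by blast
        then show "Sup (snd i) - Inf (snd i) = measure lebesgue (snd i)" by simp
      qed
      also have "\<dots> = measure lebesgue (\<Union>(snd ` P))"
      proof (rule measure_negligible_finite_Union_image[symmetric, OF finP])
        fix i assume "i \<in> P"
        then obtain c d where "snd i = {c..d}" using facP'[OF \<open>i \<in> P\<close>] by blast
        then show "snd i \<in> lmeasurable" by simp
      next
        show "pairwise (\<lambda>i j. negligible (snd i \<inter> snd j)) P"
          unfolding pairwise_def
        proof (intro ballI impI)
          fix i j assume ij: "i \<in> P" "j \<in> P" "i \<noteq> j"
          obtain c1 d1 where K1: "snd i = {c1..d1}" "c1 < d1" using facP'[OF ij(1)] by blast
          obtain c2 d2 where K2: "snd j = {c2..d2}" "c2 < d2" using facP'[OF ij(2)] by blast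
          have "d1 \<le> c2 \<or> d2 \<le> c1" using disjP[OF ij] K1 K2 by auto
          then have "snd i \<inter> snd j \<subseteq> {d1} \<or> snd i \<inter> snd j \<subseteq> {d2}" using K1 K2 by auto
          then show "negligible (snd i \<inter> snd j)"
            by (meson negligible_sing negligible_subset)
        qed
      qed
      also have "\<dots> \<le> measure lebesgue U"
      proof (rule measure_mono_fmeasurable)
        show "\<Union>(snd ` P) \<subseteq> U"
        proof
          fix z assume "z \<in> \<Union>(snd ` P)"
          then obtain i where i: "i \<in> P" "z \<in> snd i" by blast
          show "z \<in> U" using facP'[OF i(1)] i(2) by blast
        qed
        show "\<Union>(snd ` P) \<in> sets lebesgue"
        proof (rule sets.finite_Union)
          show "finite (snd ` P)" using finP by simp
          show "snd ` P \<subseteq> sets lebesgue"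
          proof
            fix K assume "K \<in> snd ` P"
            then obtain i where "i \<in> P" "K = snd i" by blast
            then obtain c d where "K = {c..d}" using facP' by metis
            then show "K \<in> sets lebesgue" by simp
          qed
        qed
        show "U \<in> lmeasurable" by (rule U(3))
      qed
      finally show ?thesis using U(4) by simp
    qed
    have c1: "\<forall>i\<in>P. a \<le> Inf (snd i) \<and> Inf (snd i) \<le> Sup (snd i) \<and> Sup (snd i) \<le> b"
    proof
      fix i assume "i \<in> P"
      then obtain c d where "snd i = {c..d}" "c < d" "x \<le> c" "d \<le> y" using facP'[OF \<open>i \<in> P\<close>] by blast
      then show "a \<le> Inf (snd i) \<and> Inf (snd i) \<le> Sup (snd i) \<and> Sup (snd i) \<le> b" using sub by auto
    qed
    have c2: "\<forall>i\<in>P. \<forall>j\<in>P. i \<noteq> j \<longrightarrow> Sup (snd i) \<le> Inf (snd j) \<or> Sup (snd j) \<le> Inf (snd i)"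
      using disjP by blast
    have acP: "(\<Sum>i\<in>P. \<bar>f (Sup (snd i)) - f (Inf (snd i))\<bar>) < e"
      apply (rule AC0[rule_format, OF finP])
      using c1 apply blast
      using c2 apply blast
      using lenP apply simp
      done
    have "(\<Sum>(t,K)\<in>P. \<bar>f (Sup K) - f (Inf K)\<bar>) < e" using acP by (simp add: split_def)
    moreover have "e * (\<Sum>(t,K)\<in>p - P. Henstock_Kurzweil_Integration.content K) \<le> e * (y - x)"
      using cont_le e by (intro mult_left_mono) auto
    ultimately have "G y - G x \<ge> - e - e * (y - x)"
      using s1 split by linarith
    then show ?thesis by (simp add: algebra_simps)
  qed
  have "G x - G y \<le> 0"
  proof (rule field_le_epsilon)
    fix e :: real assume "e > 0"
    then have "G x - G y \<le> e / (1 + (y - x)) * (1 + (y - x))"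
      using main[of "e / (1 + (y - x))"] sub by simp
    then show "G x - G y \<le> 0 + e" using sub by simp
  qed
  moreover have "\<Phi> x = 0" unfolding \<Phi>_def by simp
  ultimately show ?thesis unfolding G_def \<Phi>_def by simp
qed




lemma aux_cancel: "(D::real) \<noteq> 0 \<Longrightarrow> T \<noteq> 0 \<Longrightarrow> D/T * ((T*Y)*(1/D)) = Y"
  by (simp add: field_simps)

lemma powr_int:
  fixes p q s :: real assumes pq: "p < q" and s: "s > 0"
  shows "((\<lambda>u. ((u - p)/(q - p)) powr s) has_integral (q-p)/(s+1)) {p..q}"
proof -
  define F where "F u = (q-p)/(s+1) * ((u-p)/(q-p)) powr (s+1)" for u
  have "((\<lambda>u. ((u - p)/(q - p)) powr s) has_integral (F q - F p)) {p..q}"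
  proof (rule fundamental_theorem_of_calculus_interior)
    show "p \<le> q" using pq by simp
    have qp: "q \<noteq> p" "p \<noteq> q" "q - p > 0" "s + 1 > 0" "s + 1 \<noteq> 0" using pq s by auto
    show "continuous_on {p..q} F" unfolding F_def
      by (intro continuous_intros continuous_on_powr') (auto simp: qp)
    fix u assume u: "u \<in> {p<..<q}"
    have pos: "(u-p)/(q-p) > 0" using u pq by auto
    have d1: "((\<lambda>u. (u-p)/(q-p)) has_real_derivative 1/(q-p)) (at u)"
      using qp by (auto intro!: derivative_eq_intros)
    have "((\<lambda>u. ((u-p)/(q-p)) powr (s+1)) has_real_derivative ((s+1) * ((u-p)/(q-p)) powr (s + 1 - 1)) * (1/(q-p))) (at u)"
      by (rule DERIV_chain2[OF has_real_derivative_powr[OF pos] d1])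
    then have "(F has_real_derivative (q-p)/(s+1) * (((s+1) * ((u-p)/(q-p)) powr (s + 1 - 1)) * (1/(q-p)))) (at u)"
      unfolding F_def by (rule DERIV_cmult)
    moreover have "(q-p)/(s+1) * (((s+1) * Y) * (1/(q-p))) = Y" for Y
      using aux_cancel[of "q-p" "s+1" Y] qp by simp
    then have "(q-p)/(s+1) * (((s+1) * ((u-p)/(q-p)) powr (s + 1 - 1)) * (1/(q-p))) = ((u-p)/(q-p)) powr s"
      by simp
    ultimately show "(F has_vector_derivative ((u - p)/(q - p)) powr s) (at u)"
      by (simp add: has_real_derivative_iff_has_vector_derivative)
  qed
  moreover have "F q - F p = (q-p)/(s+1)" unfolding F_def using pq by simp
  ultimately show ?thesis by simp
qed

lemma powr_int2:
  fixes p q s :: real assumes pq: "p < q" and s: "s > 0"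
  shows "((\<lambda>u. ((q - u)/(q - p)) powr s) has_integral (q-p)/(s+1)) {p..q}"
proof -
  have "((\<lambda>u. ((u - (-q))/((-p) - (-q))) powr s) has_integral ((-p)-(-q))/(s+1)) {-q..-p}"
    by (rule powr_int) (use pq s in auto)
  then have "((\<lambda>u. ((- u - (-q))/((-p) - (-q))) powr s) has_integral ((-p)-(-q))/(s+1)) {p..q}"
    using has_integral_reflect_real[of "\<lambda>u. ((u - (-q))/((-p) - (-q))) powr s" "((-p)-(-q))/(s+1)" "-p" "-q"]
    by simp
  then show ?thesis by (simp add: algebra_simps)
qed

lemma ac_neg:
  assumes "abs_continuous_on a b f"
  shows "abs_continuous_on a b (\<lambda>t. - f t)"
  using assms unfolding abs_continuous_on_def by (simp add: abs_minus_commute)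

lemma seg_bound:
  fixes f f' :: "real \<Rightarrow> real"
  assumes ac: "abs_continuous_on a b f"
    and der: "AE t in lebesgue. t \<in> {a..b} \<longrightarrow> (f has_real_derivative f' t) (at t)"
    and sc: "s_convex_on s {a..b} (\<lambda>t. \<bar>f' t\<bar>)" and s: "0 < s"
    and pq: "a \<le> p" "p < q" "q \<le> b" and uv: "p \<le> u" "u \<le> v" "v \<le> q"
  shows "\<bar>f v - f u\<bar> \<le> (q - p) * (\<bar>f' p\<bar> + \<bar>f' q\<bar>) / (s + 1)"
proof -
  define \<phi> where "\<phi> w = \<bar>f' p\<bar> * ((q - w)/(q - p)) powr s + \<bar>f' q\<bar> * ((w - p)/(q - p)) powr s" for w
  have qp: "q \<noteq> p" "p \<noteq> q" "q - p > 0" "s > 0" using pq s by auto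
  have phic: "continuous_on {p..q} \<phi>" unfolding \<phi>_def
    by (intro continuous_intros continuous_on_powr') (auto simp: qp)
  have phinn: "0 \<le> \<phi> w" for w unfolding \<phi>_def by simp
  have phiint: "(\<phi> has_integral (q - p) * (\<bar>f' p\<bar> + \<bar>f' q\<bar>) / (s + 1)) {p..q}"
  proof -
    have "(\<phi> has_integral (\<bar>f' p\<bar> * ((q-p)/(s+1)) + \<bar>f' q\<bar> * ((q-p)/(s+1)))) {p..q}"
      unfolding \<phi>_def
      by (intro has_integral_add has_integral_mult_right powr_int powr_int2 pq s)
    moreover have eq: "\<bar>f' p\<bar> * ((q-p)/(s+1)) + \<bar>f' q\<bar> * ((q-p)/(s+1)) = (q - p) * (\<bar>f' p\<bar> + \<bar>f' q\<bar>) / (s + 1)"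
    proof -
      have "\<bar>f' p\<bar> * ((q-p)/(s+1)) + \<bar>f' q\<bar> * ((q-p)/(s+1)) = (\<bar>f' p\<bar> + \<bar>f' q\<bar>) * ((q-p)/(s+1))"
        by (simp only: distrib_right)
      also have "\<dots> = (q - p) * (\<bar>f' p\<bar> + \<bar>f' q\<bar>) / (s + 1)" by simp
      finally show ?thesis .
    qed
    ultimately show ?thesis by (simp only:)
  qed
  have bnd: "\<bar>f' w\<bar> \<le> \<phi> w" if w: "w \<in> {p..q}" for w
  proof -
    define \<alpha> where "\<alpha> = (q - w)/(q - p)"
    define \<beta> where "\<beta> = (w - p)/(q - p)"
    have ab1: "\<alpha> \<ge> 0" "\<beta> \<ge> 0" using w pq unfolding \<alpha>_def \<beta>_def by auto
    have "\<alpha> + \<beta> = ((q - w) + (w - p))/(q - p)" unfolding \<alpha>_def \<beta>_def by (simp only: add_divide_distrib)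
    also have "\<dots> = 1" using qp by simp
    finally have ab: "\<alpha> \<ge> 0" "\<beta> \<ge> 0" "\<alpha> + \<beta> = 1" using ab1 by auto
    have "\<alpha> * p + \<beta> * q = ((q - w) * p + (w - p) * q)/(q - p)"
      unfolding \<alpha>_def \<beta>_def by (simp only: add_divide_distrib times_divide_eq_left)
    also have "(q - w) * p + (w - p) * q = w * (q - p)" by (simp add: algebra_simps)
    also have "w * (q - p) / (q - p) = w" using qp by simp
    finally have "\<alpha> * p + \<beta> * q = w" .
    moreover have "p \<in> {a..b}" "q \<in> {a..b}" using pq by auto
    ultimately have "\<bar>f' w\<bar> \<le> \<alpha> powr s * \<bar>f' p\<bar> + \<beta> powr s * \<bar>f' q\<bar>"
      using sc ab unfolding s_convex_on_def by metis
    then show ?thesis unfolding \<phi>_def \<alpha>_def \<beta>_def by (simp add: mult.commute)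
  qed
  have phiintg: "\<phi> integrable_on {p..q}" using phiint by blast
  have sub_le: "integral {u..v} \<phi> \<le> (q - p) * (\<bar>f' p\<bar> + \<bar>f' q\<bar>) / (s + 1)"
  proof -
    have "integral {u..v} \<phi> \<le> integral {p..q} \<phi>"
      by (rule integral_subset_le) (use uv phinn integrable_subinterval_real[OF phiintg] phiintg in auto)
    then show ?thesis using phiint by (simp add: integral_unique)
  qed
  have phic': "continuous_on {u..v} \<phi>" by (rule continuous_on_subset[OF phic]) (use uv in auto)
  have der': "AE t in lebesgue. t \<in> {u..v} \<longrightarrow> (f has_real_derivative f' t) (at t)"
    using der by (rule eventually_mono) (use pq uv in auto)
  have der'': "AE t in lebesgue. t \<in> {u..v} \<longrightarrow> ((\<lambda>t. - f t) has_real_derivative - f' t) (at t)"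
    using der' by (rule eventually_mono) (auto intro: DERIV_minus)
  have bnd': "f' t \<le> \<phi> t \<and> - f' t \<le> \<phi> t" if "t \<in> {u..v}" for t
    using bnd[of t] that uv by (auto simp: abs_le_iff)
  have "f v - f u \<le> integral {u..v} \<phi>"
    by (rule KL[OF ac _ _ _ phic' _ der']) (use pq uv phinn bnd' in auto)
  moreover have "(- f v) - (- f u) \<le> integral {u..v} \<phi>"
    by (rule KL[OF ac_neg[OF ac] _ _ _ phic' _ der'', of ]) (use pq uv phinn bnd' in auto)
  ultimately show ?thesis using sub_le by linarith
qed




lemma piece_bound:
  fixes f w :: "real \<Rightarrow> real"
  assumes fw: "(\<lambda>t. f t * w t) integrable_on {p..q}" and wi: "w integrable_on {p..q}"
    and bd: "\<And>t. t \<in> {p..q} \<Longrightarrow> \<bar>f t - F\<bar> \<le> K \<and> 0 \<le> w t"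
  shows "\<bar>integral {p..q} (\<lambda>t. f t * w t) - F * integral {p..q} w\<bar> \<le> K * integral {p..q} w"
proof -
  have hi: "((\<lambda>t. f t * w t - F * w t) has_integral (integral {p..q} (\<lambda>t. f t * w t) - F * integral {p..q} w)) {p..q}"
    by (intro has_integral_diff has_integral_mult_right integrable_integral fw wi)
  have eqf: "(\<lambda>t. f t * w t - F * w t) = (\<lambda>t. (f t - F) * w t)" by (auto simp: algebra_simps)
  have hi2: "((\<lambda>t. (f t - F) * w t) has_integral (integral {p..q} (\<lambda>t. f t * w t) - F * integral {p..q} w)) {p..q}"
    using hi unfolding eqf .
  have Kw: "((\<lambda>t. K * w t) has_integral K * integral {p..q} w) {p..q}"
    by (intro has_integral_mult_right integrable_integral wi)
  have "norm (integral {p..q} (\<lambda>t. (f t - F) * w t)) \<le> integral {p..q} (\<lambda>t. K * w t)"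
  proof (rule integral_norm_bound_integral)
    show "(\<lambda>t. (f t - F) * w t) integrable_on {p..q}" using hi2 by blast
    show "(\<lambda>t. K * w t) integrable_on {p..q}" using Kw by blast
    fix t assume t: "t \<in> {p..q}"
    then have "\<bar>f t - F\<bar> * w t \<le> K * w t" using bd[OF t] by (intro mult_right_mono) auto
    then show "norm ((f t - F) * w t) \<le> K * w t" using bd[OF t] by (simp add: abs_mult)
  qed
  then show ?thesis using integral_unique[OF hi2] integral_unique[OF Kw] by simp
qed

lemma int_le_len:
  fixes g :: "real \<Rightarrow> real"
  assumes "g integrable_on {c..d}" "c \<le> d" "\<And>t. t \<in> {c..d} \<Longrightarrow> g t \<le> 1"
  shows "integral {c..d} g \<le> d - c"
proof -
  have "integral {c..d} g \<le> integral {c..d} (\<lambda>_. 1::real)"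
    by (rule integral_le) (use assms in auto)
  then show ?thesis using assms(2) by simp
qed




theorem theorem2p5:
  fixes a b s :: real and f f' g :: "real \<Rightarrow> real"
  assumes ab: "0 \<le> a" "a < b"
    and s: "0 < s" "s \<le> 1"
    and f_int: "f integrable_on {a..b}"
    and g_int: "g integrable_on {a..b}"
    and g_bounds: "\<And>t. t \<in> {a..b} \<Longrightarrow> 0 \<le> g t \<and> g t \<le> 1"
    and gf'_int: "(\<lambda>t. g t * f' t) integrable_on {a..b}"
    and f_ac: "abs_continuous_on a b f"
    and f'_deriv: "AE t in lebesgue. t \<in> {a..b} \<longrightarrow> (f has_real_derivative f' t) (at t)"
    and f'_sconv: "s_convex_on s {a..b} (\<lambda>t. \<bar>f' t\<bar>)"
  defines "lam \<equiv> integral {a..b} g"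
  shows "\<bar>integral {a..a+lam} f - integral {a..b} (\<lambda>t. f t * g t)\<bar>
           \<le> 1 / (s + 1) * integral {a+lam..b} g
               * (lam * \<bar>f' a\<bar> + (b - a) * \<bar>f' (a+lam)\<bar> + (b - a - lam) * \<bar>f' b\<bar>)
       \<and> 1 / (s + 1) * integral {a+lam..b} g
               * (lam * \<bar>f' a\<bar> + (b - a) * \<bar>f' (a+lam)\<bar> + (b - a - lam) * \<bar>f' b\<bar>)
           \<le> (b - a - lam) / (s + 1)
               * (lam * \<bar>f' a\<bar> + (b - a) * \<bar>f' (a+lam)\<bar> + (b - a - lam) * \<bar>f' b\<bar>)
       \<and> \<bar>integral {a..b} (\<lambda>t. f t * g t) - integral {b-lam..b} f\<bar>
           \<le> 1 / (s + 1) * integral {a..b-lam} g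
               * ((b - a - lam) * \<bar>f' a\<bar> + (b - a) * \<bar>f' (b-lam)\<bar> + lam * \<bar>f' b\<bar>)
       \<and> 1 / (s + 1) * integral {a..b-lam} g
               * ((b - a - lam) * \<bar>f' a\<bar> + (b - a) * \<bar>f' (b-lam)\<bar> + lam * \<bar>f' b\<bar>)
           \<le> lam / (s + 1)
               * ((b - a - lam) * \<bar>f' a\<bar> + (b - a) * \<bar>f' (b-lam)\<bar> + lam * \<bar>f' b\<bar>)"
proof -
  have s1: "s + 1 > 0" "s + 1 \<noteq> 0" using s by auto
  have lam0: "0 \<le> lam" unfolding lam_def
    by (rule integral_nonneg[OF g_int]) (use g_bounds in auto)
  have lamb: "lam \<le> b - a" unfolding lam_def
    by (rule int_le_len[OF g_int]) (use ab g_bounds in auto)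
  have fc: "continuous_on {a..b} f" by (rule ac_cont[OF f_ac])
  have fgI: "(\<lambda>t. f t * g t) integrable_on {a..b}"
  proof -
    have "g absolutely_integrable_on {a..b}"
      by (rule nonnegative_absolutely_integrable_1[OF g_int]) (use g_bounds in auto)
    moreover have "bounded (f ` {a..b})"
      by (rule compact_imp_bounded[OF compact_continuous_image[OF fc compact_Icc]])
    ultimately have "(\<lambda>t. f t * g t) absolutely_integrable_on {a..b}"
      by (intro absolutely_integrable_bounded_measurable_product_real continuous_imp_measurable_on_sets_lebesgue fc) auto
    then show ?thesis using set_lebesgue_integral_eq_integral(1) by blast
  qed
  have gS: "g integrable_on {c..d}" if "a \<le> c" "d \<le> b" for c d
    by (rule integrable_subinterval_real[OF g_int]) (use that in auto)
  have fgS: "(\<lambda>t. f t * g t) integrable_on {c..d}" if "a \<le> c" "d \<le> b" for c d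
    by (rule integrable_subinterval_real[OF fgI]) (use that in auto)
  have fS: "f integrable_on {c..d}" if "a \<le> c" "d \<le> b" for c d
    by (rule integrable_continuous_interval[OF continuous_on_subset[OF fc]]) (use that in auto)
  have eqfomg: "(\<lambda>t. f t * (1 - g t)) = (\<lambda>t. f t - f t * g t)" by (auto simp: algebra_simps)
  have fomgS: "(\<lambda>t. f t * (1 - g t)) integrable_on {c..d}" if "a \<le> c" "d \<le> b" for c d
    unfolding eqfomg by (intro integrable_diff fS fgS that)
  have omgS: "(\<lambda>t. 1 - g t) integrable_on {c..d}" if "a \<le> c" "d \<le> b" for c d
    by (intro integrable_diff gS that integrable_const_ivl)
  have int_fomg: "integral {c..d} (\<lambda>t. f t * (1 - g t)) = integral {c..d} f - integral {c..d} (\<lambda>t. f t * g t)"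
    if "a \<le> c" "d \<le> b" for c d
    unfolding eqfomg by (intro integral_diff fS fgS that)
  have int_omg: "integral {c..d} (\<lambda>t. 1 - g t) = (d - c) - integral {c..d} g"
    if "a \<le> c" "c \<le> d" "d \<le> b" for c d
  proof -
    have "integral {c..d} (\<lambda>t. 1 - g t) = integral {c..d} (\<lambda>t. 1::real) - integral {c..d} g"
      by (intro integral_diff gS that integrable_const_ivl)
    then show ?thesis using that by simp
  qed
  have comb_g: "integral {a..c} g + integral {c..b} g = lam" if "a \<le> c" "c \<le> b" for c
    unfolding lam_def by (rule Henstock_Kurzweil_Integration.integral_combine[OF that g_int])
  have comb_fg: "integral {a..c} (\<lambda>t. f t * g t) + integral {c..b} (\<lambda>t. f t * g t) = integral {a..b} (\<lambda>t. f t * g t)"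
    if "a \<le> c" "c \<le> b" for c
    by (rule Henstock_Kurzweil_Integration.integral_combine[OF that fgI])
  have gnn: "\<And>c d. a \<le> c \<Longrightarrow> d \<le> b \<Longrightarrow> 0 \<le> integral {c..d} g"
    by (rule integral_nonneg[OF gS]) (use g_bounds in auto)
  have segb: "\<bar>f v - f u\<bar> \<le> (q - p) * (\<bar>f' p\<bar> + \<bar>f' q\<bar>) / (s + 1)"
    if "a \<le> p" "p \<le> q" "q \<le> b" "p \<le> u" "u \<le> v" "v \<le> q" for p q u v
  proof (cases "p = q")
    case True
    then have "u = v" using that by auto
    then show ?thesis using that s1 by (auto intro!: divide_nonneg_pos mult_nonneg_nonneg)
  next
    case False
    then show ?thesis using seg_bound[OF f_ac f'_deriv f'_sconv s(1)] that by auto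
  qed
  define c where "c = a + lam"
  define F where "F = f c"
  define m where "m = integral {c..b} g"
  define K1 where "K1 = (c - a) * (\<bar>f' a\<bar> + \<bar>f' c\<bar>) / (s + 1)"
  define K2 where "K2 = (b - c) * (\<bar>f' c\<bar> + \<bar>f' b\<bar>) / (s + 1)"
  have c: "a \<le> c" "c \<le> b" using lam0 lamb unfolding c_def by auto
  have W1: "integral {a..c} (\<lambda>t. 1 - g t) = m"
    using int_omg[of a c] c comb_g[OF c] unfolding m_def c_def by auto
  have P1: "\<bar>integral {a..c} (\<lambda>t. f t * (1 - g t)) - F * integral {a..c} (\<lambda>t. 1 - g t)\<bar> \<le> K1 * integral {a..c} (\<lambda>t. 1 - g t)"
  proof (rule piece_bound)
    show "(\<lambda>t. f t * (1 - g t)) integrable_on {a..c}" using fomgS c by auto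
    show "(\<lambda>t. 1 - g t) integrable_on {a..c}" using omgS c by auto
    fix t assume t: "t \<in> {a..c}"
    have "\<bar>f c - f t\<bar> \<le> (c - a) * (\<bar>f' a\<bar> + \<bar>f' c\<bar>) / (s + 1)"
      using segb[of a c t c] t c by auto
    then show "\<bar>f t - F\<bar> \<le> K1 \<and> 0 \<le> 1 - g t"
      using g_bounds[of t] t c unfolding F_def K1_def by (auto simp: abs_minus_commute)
  qed
  have P2: "\<bar>integral {c..b} (\<lambda>t. f t * g t) - F * integral {c..b} g\<bar> \<le> K2 * integral {c..b} g"
  proof (rule piece_bound)
    show "(\<lambda>t. f t * g t) integrable_on {c..b}" using fgS c by auto
    show "g integrable_on {c..b}" using gS c by auto
    fix t assume t: "t \<in> {c..b}"
    have "\<bar>f t - f c\<bar> \<le> (b - c) * (\<bar>f' c\<bar> + \<bar>f' b\<bar>) / (s + 1)"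
      using segb[of c b c t] t c by auto
    then show "\<bar>f t - F\<bar> \<le> K2 \<and> 0 \<le> g t"
      using g_bounds[of t] t c unfolding F_def K2_def by auto
  qed
  have I1: "integral {a..c} f - integral {a..b} (\<lambda>t. f t * g t)
     = (integral {a..c} (\<lambda>t. f t * (1 - g t)) - F * integral {a..c} (\<lambda>t. 1 - g t))
       - (integral {c..b} (\<lambda>t. f t * g t) - F * integral {c..b} g)"
    using int_fomg[of a c] c comb_fg[OF c] W1 unfolding m_def by auto
  have part1: "\<bar>integral {a..c} f - integral {a..b} (\<lambda>t. f t * g t)\<bar> \<le> K1 * m + K2 * m"
    using P1[unfolded W1] P2[folded m_def] I1[unfolded W1, folded m_def] unfolding abs_le_iff by linarith
  have m0: "0 \<le> m" unfolding m_def using gnn c by auto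
  have mle: "m \<le> b - a - lam" unfolding m_def
    using int_le_len[OF gS[OF c(1) order_refl] c(2)] g_bounds c unfolding c_def by auto
  have eq1: "K1 * m + K2 * m = 1 / (s + 1) * m * (lam * \<bar>f' a\<bar> + (b - a) * \<bar>f' c\<bar> + (b - a - lam) * \<bar>f' b\<bar>)"
  proof -
    have num: "(c - a) * (\<bar>f' a\<bar> + \<bar>f' c\<bar>) + (b - c) * (\<bar>f' c\<bar> + \<bar>f' b\<bar>) = lam * \<bar>f' a\<bar> + (b - a) * \<bar>f' c\<bar> + (b - a - lam) * \<bar>f' b\<bar>"
      unfolding c_def by (simp add: algebra_simps)
    have "K1 * m + K2 * m = ((c - a) * (\<bar>f' a\<bar> + \<bar>f' c\<bar>) + (b - c) * (\<bar>f' c\<bar> + \<bar>f' b\<bar>)) / (s + 1) * m"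
      unfolding K1_def K2_def by (simp only: add_divide_distrib distrib_right)
    also have "\<dots> = 1 / (s + 1) * m * (lam * \<bar>f' a\<bar> + (b - a) * \<bar>f' c\<bar> + (b - a - lam) * \<bar>f' b\<bar>)"
      unfolding num by simp
    finally show ?thesis .
  qed
  define Br where "Br = lam * \<bar>f' a\<bar> + (b - a) * \<bar>f' c\<bar> + (b - a - lam) * \<bar>f' b\<bar>"
  have Br0: "0 \<le> Br" unfolding Br_def using lam0 lamb by auto
  have second: "1 / (s + 1) * m * Br \<le> (b - a - lam) / (s + 1) * Br"
  proof -
    have "m * Br \<le> (b - a - lam) * Br" using mle Br0 by (rule mult_right_mono)
    then have "(m * Br) / (s + 1) \<le> ((b - a - lam) * Br) / (s + 1)" by (rule divide_right_mono) (use s1 in auto)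
    then show ?thesis by simp
  qed
  define c' where "c' = b - lam"
  define F' where "F' = f c'"
  define m' where "m' = integral {a..c'} g"
  define K1' where "K1' = (c' - a) * (\<bar>f' a\<bar> + \<bar>f' c'\<bar>) / (s + 1)"
  define K2' where "K2' = (b - c') * (\<bar>f' c'\<bar> + \<bar>f' b\<bar>) / (s + 1)"
  have c': "a \<le> c'" "c' \<le> b" using lam0 lamb unfolding c'_def by auto
  have W2: "integral {c'..b} (\<lambda>t. 1 - g t) = m'"
    using int_omg[of c' b] c' comb_g[OF c'] unfolding m'_def c'_def by auto
  have P1': "\<bar>integral {a..c'} (\<lambda>t. f t * g t) - F' * integral {a..c'} g\<bar> \<le> K1' * integral {a..c'} g"
  proof (rule piece_bound)
    show "(\<lambda>t. f t * g t) integrable_on {a..c'}" using fgS c' by auto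
    show "g integrable_on {a..c'}" using gS c' by auto
    fix t assume t: "t \<in> {a..c'}"
    have "\<bar>f c' - f t\<bar> \<le> (c' - a) * (\<bar>f' a\<bar> + \<bar>f' c'\<bar>) / (s + 1)"
      using segb[of a c' t c'] t c' by auto
    then show "\<bar>f t - F'\<bar> \<le> K1' \<and> 0 \<le> g t"
      using g_bounds[of t] t c' unfolding F'_def K1'_def by (auto simp: abs_minus_commute)
  qed
  have P2': "\<bar>integral {c'..b} (\<lambda>t. f t * (1 - g t)) - F' * integral {c'..b} (\<lambda>t. 1 - g t)\<bar> \<le> K2' * integral {c'..b} (\<lambda>t. 1 - g t)"
  proof (rule piece_bound)
    show "(\<lambda>t. f t * (1 - g t)) integrable_on {c'..b}" using fomgS c' by auto
    show "(\<lambda>t. 1 - g t) integrable_on {c'..b}" using omgS c' by auto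
    fix t assume t: "t \<in> {c'..b}"
    have "\<bar>f t - f c'\<bar> \<le> (b - c') * (\<bar>f' c'\<bar> + \<bar>f' b\<bar>) / (s + 1)"
      using segb[of c' b c' t] t c' by auto
    then show "\<bar>f t - F'\<bar> \<le> K2' \<and> 0 \<le> 1 - g t"
      using g_bounds[of t] t c' unfolding F'_def K2'_def by auto
  qed
  have I2: "integral {a..b} (\<lambda>t. f t * g t) - integral {c'..b} f
     = (integral {a..c'} (\<lambda>t. f t * g t) - F' * integral {a..c'} g)
       - (integral {c'..b} (\<lambda>t. f t * (1 - g t)) - F' * integral {c'..b} (\<lambda>t. 1 - g t))"
    using int_fomg[of c' b] c' comb_fg[OF c'] W2 unfolding m'_def by auto
  have part2: "\<bar>integral {a..b} (\<lambda>t. f t * g t) - integral {c'..b} f\<bar> \<le> K1' * m' + K2' * m'"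
    using P1'[folded m'_def] P2'[unfolded W2] I2[unfolded W2, folded m'_def] unfolding abs_le_iff by linarith
  have mle': "m' \<le> lam"
    using comb_g[OF c'] gnn[of c' b] c' unfolding m'_def by auto
  have eq2: "K1' * m' + K2' * m' = 1 / (s + 1) * m' * ((b - a - lam) * \<bar>f' a\<bar> + (b - a) * \<bar>f' c'\<bar> + lam * \<bar>f' b\<bar>)"
  proof -
    have num: "(c' - a) * (\<bar>f' a\<bar> + \<bar>f' c'\<bar>) + (b - c') * (\<bar>f' c'\<bar> + \<bar>f' b\<bar>) = (b - a - lam) * \<bar>f' a\<bar> + (b - a) * \<bar>f' c'\<bar> + lam * \<bar>f' b\<bar>"
      unfolding c'_def by (simp add: algebra_simps)
    have "K1' * m' + K2' * m' = ((c' - a) * (\<bar>f' a\<bar> + \<bar>f' c'\<bar>) + (b - c') * (\<bar>f' c'\<bar> + \<bar>f' b\<bar>)) / (s + 1) * m'"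
      unfolding K1'_def K2'_def by (simp only: add_divide_distrib distrib_right)
    also have "\<dots> = 1 / (s + 1) * m' * ((b - a - lam) * \<bar>f' a\<bar> + (b - a) * \<bar>f' c'\<bar> + lam * \<bar>f' b\<bar>)"
      unfolding num by simp
    finally show ?thesis .
  qed
  define Br' where "Br' = (b - a - lam) * \<bar>f' a\<bar> + (b - a) * \<bar>f' c'\<bar> + lam * \<bar>f' b\<bar>"
  have Br0': "0 \<le> Br'" unfolding Br'_def using lam0 lamb by auto
  have fourth: "1 / (s + 1) * m' * Br' \<le> lam / (s + 1) * Br'"
  proof -
    have "m' * Br' \<le> lam * Br'" using mle' Br0' by (rule mult_right_mono)
    then have "(m' * Br') / (s + 1) \<le> (lam * Br') / (s + 1)" by (rule divide_right_mono) (use s1 in auto)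
    then show ?thesis by simp
  qed
  show ?thesis
    using part1 eq1 second part2 eq2 fourth
    unfolding c_def m_def Br_def c'_def m'_def Br'_def by simp
qed


end
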